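(* For arbitrarily large integers $n$ there exists a family $\mathcal{F}$ of subsets of $[n]$ with $|\mathcal{F}|\ge 8n/3$ having the following two properties: (i) every $A\in\mathcal{F}$ has odd cardinality; (ii) there are no distinct $A,B,C\in\mathcal{F}$ such that $|A\cap B|$, $|A\cap C|$ and $|B\cap C|$ are all odd. *)

theory Defs
  imports Main
begin

end

theory Submission imports Defs begin
definition Fb :: "nat set set" where
"Fb = {{1},{2},{3},{4},{5},{1,2,3,4,5},{1,2,6},{1,3,6},{2,3,6},{1,4,6},{2,4,6},{3,4,6},{1,5,6},{2,5,6},{3,5,6},{4,5,6}}"
lemma base: "\<forall>A\<in>Fb. \<forall>B\<in>Fb. \<forall>C\<in>Fb. A \<noteq> B \<and> A \<noteq> C \<and> B \<noteq> C \<longrightarrow>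
   \<not>(odd (card (A \<inter> B)) \<and> odd (card (A \<inter> C)) \<and> odd (card (B \<inter> C)))"
  unfolding Fb_def by code_simp
lemma card_Fb: "card Fb = 16" unfolding Fb_def by code_simp
lemma odd_Fb: "\<forall>A\<in>Fb. odd (card A)" unfolding Fb_def by code_simp
lemma sub_Fb: "\<forall>A\<in>Fb. A \<subseteq> {1..6} \<and> A \<noteq> {}" unfolding Fb_def by code_simp
definition sh :: "nat \<Rightarrow> nat set \<Rightarrow> nat set" where "sh j A = (\<lambda>x. 6*j + x) ` A"

lemma sh_inter: "sh j A \<inter> sh j B = sh j (A \<inter> B)"
  unfolding sh_def by (auto)
lemma card_sh: "card (sh j A) = card A"
  unfolding sh_def by (simp add: card_image)
lemma sh_disj: assumes "A \<subseteq> {1..6}" "B \<subseteq> {1..6}" "j \<noteq> j'"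
  shows "sh j A \<inter> sh j' B = {}"
proof -
  { fix x y assume "x \<in> A" "y \<in> B" "6*j + x = 6*j' + y"
    with assms have "1 \<le> x" "x \<le> 6" "1 \<le> y" "y \<le> 6" by auto
    with \<open>6*j + x = 6*j' + y\<close> \<open>j \<noteq> j'\<close> have False by (cases "j < j'") (auto dest!: less_imp_Suc_add) }
  then show ?thesis unfolding sh_def by auto
qed
lemma sh_inj: assumes "A \<in> Fb" "B \<in> Fb" "sh j A = sh j' B" shows "j = j' \<and> A = B"
proof -
  have j: "j = j'"
  proof (rule ccontr)
    assume "j \<noteq> j'"
    hence "sh j A \<inter> sh j' B = {}" using sh_disj sub_Fb assms by blast
    moreover have "sh j A \<noteq> {}" using sub_Fb assms unfolding sh_def by auto
    ultimately show False using assms by auto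
  qed
  have "inj ((+) (6*j))" by simp
  hence "A = B" using assms(3) j unfolding sh_def by (simp add: inj_image_eq_iff)
  with j show ?thesis by simp
qed

theorem lemma4p2:
  shows "\<forall>N::nat. \<exists>n\<ge>N. \<exists>F :: nat set set.
           F \<subseteq> Pow {1..n} \<and>
           3 * card F \<ge> 8 * n \<and>
           (\<forall>A\<in>F. odd (card A)) \<and>
           \<not> (\<exists>A\<in>F. \<exists>B\<in>F. \<exists>C\<in>F. A \<noteq> B \<and> A \<noteq> C \<and> B \<noteq> C \<and>
                 odd (card (A \<inter> B)) \<and> odd (card (A \<inter> C)) \<and> odd (card (B \<inter> C)))"
proof
  fix N :: nat
  define k where "k = N + 1"
  define F where "F = (\<lambda>(j,A). sh j A) ` ({..<k} \<times> Fb)"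
  have sub: "F \<subseteq> Pow {1..6*k}"
  proof
    fix X assume "X \<in> F"
    then obtain j A where jA: "j < k" "A \<in> Fb" "X = sh j A" unfolding F_def by auto
    have "A \<subseteq> {1..6}" using sub_Fb jA by blast
    hence "X \<subseteq> {1..6*k}" using jA unfolding sh_def by auto
    thus "X \<in> Pow {1..6*k}" by simp
  qed
  have inj: "inj_on (\<lambda>(j,A). sh j A) ({..<k} \<times> Fb)"
    by (auto simp: inj_on_def dest: sh_inj)
  have cF: "card F = 16 * k"
    unfolding F_def by (simp add: card_image[OF inj] card_cartesian_product card_Fb)
  have oddF: "\<forall>A\<in>F. odd (card A)"
    unfolding F_def using odd_Fb by (auto simp: card_sh)
  have tri: "\<not> (\<exists>A\<in>F. \<exists>B\<in>F. \<exists>C\<in>F. A \<noteq> B \<and> A \<noteq> C \<and> B \<noteq> C \<and>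
                 odd (card (A \<inter> B)) \<and> odd (card (A \<inter> C)) \<and> odd (card (B \<inter> C)))"
  proof
    assume "\<exists>A\<in>F. \<exists>B\<in>F. \<exists>C\<in>F. A \<noteq> B \<and> A \<noteq> C \<and> B \<noteq> C \<and>
                 odd (card (A \<inter> B)) \<and> odd (card (A \<inter> C)) \<and> odd (card (B \<inter> C))"
    then obtain A B C where ABC: "A\<in>F" "B\<in>F" "C\<in>F" "A \<noteq> B" "A \<noteq> C" "B \<noteq> C"
      "odd (card (A \<inter> B))" "odd (card (A \<inter> C))" "odd (card (B \<inter> C))" by blast
    obtain a A0 where a: "A0 \<in> Fb" "A = sh a A0" using ABC(1) unfolding F_def by auto
    obtain b B0 where b: "B0 \<in> Fb" "B = sh b B0" using ABC(2) unfolding F_def by auto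
    obtain c C0 where c: "C0 \<in> Fb" "C = sh c C0" using ABC(3) unfolding F_def by auto
    have ab: "a = b"
    proof (rule ccontr)
      assume "a \<noteq> b" hence "A \<inter> B = {}" using sh_disj sub_Fb a b by blast
      thus False using ABC(7) by simp
    qed
    have ac: "a = c"
    proof (rule ccontr)
      assume "a \<noteq> c" hence "A \<inter> C = {}" using sh_disj sub_Fb a c by blast
      thus False using ABC(8) by simp
    qed
    have "A0 \<noteq> B0" "A0 \<noteq> C0" "B0 \<noteq> C0" using ABC(4-6) a b c ab ac by auto
    moreover have "odd (card (A0 \<inter> B0))" "odd (card (A0 \<inter> C0))" "odd (card (B0 \<inter> C0))"
      using ABC(7-9) a b c ab ac by (simp_all add: sh_inter card_sh)
    ultimately show False using base a b c by blast
  qed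
  show "\<exists>n\<ge>N. \<exists>F :: nat set set.
           F \<subseteq> Pow {1..n} \<and>
           3 * card F \<ge> 8 * n \<and>
           (\<forall>A\<in>F. odd (card A)) \<and>
           \<not> (\<exists>A\<in>F. \<exists>B\<in>F. \<exists>C\<in>F. A \<noteq> B \<and> A \<noteq> C \<and> B \<noteq> C \<and>
                 odd (card (A \<inter> B)) \<and> odd (card (A \<inter> C)) \<and> odd (card (B \<inter> C)))"
    by (rule exI[of _ "6*k"], intro conjI exI[of _ F]) (use sub cF oddF tri k_def in auto)
qed
end
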